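(* Let $S \subseteq \mathbb{R}^r$ be a linear subspace, $0 \le d \le r$, and $C = C(S,d)$ the associated s-cone. For a nonzero vector $x \in C$, the following are equivalent: (i) $x$ is support-minimal; (ii) $x$ is support-wise non-decomposable; (iii) $x$ is conformally non-decomposable.
   Context: For $x \in \mathbb{R}^n$, $\operatorname{supp}(x) = \{ i \mid x_i \neq 0\}$, and $\operatorname{sign}(x) \in \{-,0,+\}^n$ is obtained by applying the sign function componentwise; the relations $0<-$, $0<+$ induce a componentwise partial order on $\{-,0,+\}^n$. For a linear subspace $S \subseteq \mathbb{R}^r$ and $0 \le d \le r$, the s-cone is $C(S,d) = \{ (x,y) \in \mathbb{R}^{(r-d)+d} \mid (x,y) \in S,\ y \ge 0\}$. For a convex cone $C$ and nonzero $x \in C$: $x$ is support-minimal if for all nonzero $x' \in C$, $\operatorname{supp}(x') \subseteq \operatorname{supp}(x)$ implies $\operatorname{supp}(x') = \operatorname{supp}(x)$; $x$ is support-wise non-decomposable if for all nonzero $x^1,x^2 \in C$ with $\operatorname{supp}(x^1),\operatorname{supp}(x^2) \subseteq \operatorname{supp}(x)$, $x = x^1 + x^2$ implies $\operatorname{supp}(x^1) = \operatorname{supp}(x^2)$; $x$ is conformally non-decomposable if for all nonzero $x^1,x^2 \in C$ with $\operatorname{sign}(x^1),\operatorname{sign}(x^2) \le \operatorname{sign}(x)$, $x = x^1 + x^2$ implies $x^1 = \lambda x^2$ for some $\lambda > 0$. *)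

theory Defs
  imports "HOL-Analysis.Analysis"
begin

text \<open>Vectors of R^r are modelled as functions nat => real that vanish at indices >= r;
  coordinate i (0-based, i < r) is v i.  The last d coordinates (indices r-d .. r-1)
  form the y-part of the s-cone.\<close>

definition Rn :: "nat \<Rightarrow> (nat \<Rightarrow> real) set" where
  "Rn r = {v. \<forall>i\<ge>r. v i = 0}"

definition supp :: "(nat \<Rightarrow> real) \<Rightarrow> nat set" where
  "supp x = {i. x i \<noteq> 0}"

definition sign_le :: "(nat \<Rightarrow> real) \<Rightarrow> (nat \<Rightarrow> real) \<Rightarrow> bool" where
  "sign_le x y = (\<forall>i. sgn (x i) = 0 \<or> sgn (x i) = sgn (y i))"

definition scone :: "(nat \<Rightarrow> real) set \<Rightarrow> nat \<Rightarrow> nat \<Rightarrow> (nat \<Rightarrow> real) set" where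
  "scone S r d = {v. v \<in> S \<and> (\<forall>i. r - d \<le> i \<and> i < r \<longrightarrow> v i \<ge> 0)}"

definition support_minimal :: "(nat \<Rightarrow> real) set \<Rightarrow> (nat \<Rightarrow> real) \<Rightarrow> bool" where
  "support_minimal C x = (x \<in> C \<and> x \<noteq> (\<lambda>_. 0) \<and>
     (\<forall>x'\<in>C. x' \<noteq> (\<lambda>_. 0) \<longrightarrow> supp x' \<subseteq> supp x \<longrightarrow> supp x' = supp x))"

definition supportwise_nondecomposable :: "(nat \<Rightarrow> real) set \<Rightarrow> (nat \<Rightarrow> real) \<Rightarrow> bool" where
  "supportwise_nondecomposable C x = (x \<in> C \<and> x \<noteq> (\<lambda>_. 0) \<and>
     (\<forall>x1\<in>C. \<forall>x2\<in>C. x1 \<noteq> (\<lambda>_. 0) \<longrightarrow> x2 \<noteq> (\<lambda>_. 0) \<longrightarrow> supp x1 \<subseteq> supp x \<longrightarrow> supp x2 \<subseteq> supp x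
        \<longrightarrow> x = (\<lambda>i. x1 i + x2 i) \<longrightarrow> supp x1 = supp x2))"

definition conformally_nondecomposable :: "(nat \<Rightarrow> real) set \<Rightarrow> (nat \<Rightarrow> real) \<Rightarrow> bool" where
  "conformally_nondecomposable C x = (x \<in> C \<and> x \<noteq> (\<lambda>_. 0) \<and>
     (\<forall>x1\<in>C. \<forall>x2\<in>C. x1 \<noteq> (\<lambda>_. 0) \<longrightarrow> x2 \<noteq> (\<lambda>_. 0) \<longrightarrow> sign_le x1 x \<longrightarrow> sign_le x2 x
        \<longrightarrow> x = (\<lambda>i. x1 i + x2 i) \<longrightarrow> (\<exists>c>0. x1 = (\<lambda>i. c * x2 i))))"

end

theory Submission
  imports Defs
begin

lemma sign_le_alt: "sign_le a b \<longleftrightarrow> (\<forall>i. a i = 0 \<or> a i * b i > 0)"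
  unfolding sign_le_def
proof (intro iffI allI)
  fix i assume h: "\<forall>i. sgn (a i) = 0 \<or> sgn (a i) = sgn (b i)"
  show "a i = 0 \<or> a i * b i > 0" using h[rule_format, of i]
    by (cases "a i" "0::real" rule: linorder_cases; cases "b i" "0::real" rule: linorder_cases)
       (auto simp: mult_pos_pos mult_neg_neg)
next
  fix i assume h: "\<forall>i. a i = 0 \<or> a i * b i > 0"
  show "sgn (a i) = 0 \<or> sgn (a i) = sgn (b i)" using h[rule_format, of i]
    by (auto simp: zero_less_mult_iff)
qed

lemma sq_pos: "(a::real) \<noteq> 0 \<Longrightarrow> a * a > 0"
  by (metis mult_pos_pos mult_neg_neg linorder_neqE_linordered_idom)

lemma pos_trans: "(a::real) * b > 0 \<Longrightarrow> b * c > 0 \<Longrightarrow> a * c > 0"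
  by (auto simp: zero_less_mult_iff)

lemma supp_scale: "(c::real) \<noteq> 0 \<Longrightarrow> supp (\<lambda>i. c * u i) = supp u"
  by (auto simp: supp_def)

lemma min_ratio:
  fixes a b :: "nat \<Rightarrow> real"
  assumes "finite P" "P \<noteq> {}" "\<forall>i\<in>P. a i * b i > 0"
  shows "\<exists>l>0. (\<forall>i\<in>P. l \<le> a i / b i) \<and> (\<exists>i0\<in>P. a i0 = l * b i0)"
proof -
  define l where "l = Min ((\<lambda>i. a i / b i) ` P)"
  have "l \<in> (\<lambda>i. a i / b i) ` P" unfolding l_def using assms by (intro Min_in) auto
  then obtain i0 where i0: "i0 \<in> P" "l = a i0 / b i0" by auto
  have bne: "b i0 \<noteq> 0" using assms(3) i0 by auto
  have "l > 0" using i0 assms(3) by (simp add: zero_less_divide_iff zero_less_mult_iff)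
  moreover have "\<forall>i\<in>P. l \<le> a i / b i" unfolding l_def using assms by auto
  moreover have "a i0 = l * b i0" using i0 bne by simp
  ultimately show ?thesis using i0 by blast
qed

theorem proposition2:
  fixes S :: "(nat \<Rightarrow> real) set" and r d :: nat and x :: "nat \<Rightarrow> real"
  assumes "(\<lambda>_. 0) \<in> S" and "\<And>u v. u \<in> S \<Longrightarrow> v \<in> S \<Longrightarrow> (\<lambda>i. u i + v i) \<in> S"
    and "\<And>c u. u \<in> S \<Longrightarrow> (\<lambda>i. c * u i) \<in> S" and "S \<subseteq> Rn r" and "d \<le> r"
    and "x \<in> scone S r d" and "x \<noteq> (\<lambda>_. 0)"
  shows "(support_minimal (scone S r d) x \<longleftrightarrow> supportwise_nondecomposable (scone S r d) x)
       \<and> (supportwise_nondecomposable (scone S r d) x \<longleftrightarrow> conformally_nondecomposable (scone S r d) x)"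
proof -
  define C where "C = scone S r d"
  have sub: "\<And>u v c. u \<in> S \<Longrightarrow> v \<in> S \<Longrightarrow> (\<lambda>i. u i - c * v i) \<in> S"
  proof -
    fix u v c assume "u \<in> S" "v \<in> S"
    then have "(\<lambda>i. u i + (-c) * v i) \<in> S" using assms(2,3) by blast
    then show "(\<lambda>i. u i - c * v i) \<in> S" by simp
  qed
  have Cd: "\<And>u. u \<in> C \<Longrightarrow> u \<in> S \<and> (\<forall>i. r - d \<le> i \<and> i < r \<longrightarrow> u i \<ge> 0)"
    unfolding C_def scone_def by auto
  have xC: "x \<in> C" using assms(6) C_def by simp
  have xS: "x \<in> S" using Cd xC by blast
  have fin: "\<And>u. u \<in> S \<Longrightarrow> finite (supp u)"
  proof -
    fix u assume "u \<in> S"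
    have "supp u \<subseteq> {..<r}" proof
      fix i assume "i \<in> supp u"
      then have "u i \<noteq> 0" by (simp add: supp_def)
      moreover have "\<forall>j\<ge>r. u j = 0" using \<open>u \<in> S\<close> assms(4) by (auto simp: Rn_def)
      ultimately show "i \<in> {..<r}" by (meson lessThan_iff not_less)
    qed
    then show "finite (supp u)" using finite_subset by blast
  qed
  have conf_in: "\<And>u. u \<in> S \<Longrightarrow> sign_le u x \<Longrightarrow> u \<in> C"
  proof -
    fix u assume u: "u \<in> S" "sign_le u x"
    have "\<forall>i. r - d \<le> i \<and> i < r \<longrightarrow> u i \<ge> 0"
    proof (intro allI impI)
      fix i assume i: "r - d \<le> i \<and> i < r"
      then have "x i \<ge> 0" using Cd xC by blast
      moreover have "u i = 0 \<or> u i * x i > 0" using u(2) sign_le_alt by blast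
      ultimately show "u i \<ge> 0" by (auto simp: zero_less_mult_iff)
    qed
    then show "u \<in> C" using u unfolding C_def scone_def by auto
  qed
  have sl_supp: "\<And>u. sign_le u x \<Longrightarrow> supp u \<subseteq> supp x"
    by (auto simp: sign_le_alt supp_def)
  have xne: "supp x \<noteq> {}" using assms(7) by (auto simp: supp_def)
  have finx: "finite (supp x)" using fin xS by blast
  have zero_iff: "\<And>u::nat\<Rightarrow>real. u = (\<lambda>_. 0) \<longleftrightarrow> supp u = {}"
    by (auto simp: supp_def)

  have B2: "\<not> supportwise_nondecomposable C x \<and> \<not> conformally_nondecomposable C x"
    if z: "z \<in> S" "z \<noteq> (\<lambda>_. 0)" "sign_le z x" "supp z \<noteq> supp x" for z
  proof -
    have zC: "z \<in> C" using conf_in z by blast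
    have pos: "\<forall>i\<in>supp z. x i * z i > 0"
      using z(3) by (auto simp: sign_le_alt supp_def mult.commute)
    have "supp z \<noteq> {}" using z(2) zero_iff by blast
    then obtain m where m: "m > 0" "\<forall>i\<in>supp z. m \<le> x i / z i"
      using min_ratio[OF fin[OF z(1)] _ pos] by blast
    define e where "e = m / 2"
    have e: "e > 0" "e < m" using m e_def by auto
    define x1 where "x1 = (\<lambda>i. x i - e * z i)"
    define x2 where "x2 = (\<lambda>i. e * z i)"
    have x1S: "x1 \<in> S" unfolding x1_def using sub xS z(1) by blast
    have x2S: "x2 \<in> S" unfolding x2_def using assms(3) z(1) by blast
    have x1pos: "\<forall>i\<in>supp x. x1 i * x i > 0"
    proof
      fix i assume i: "i \<in> supp x"
      show "x1 i * x i > 0"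
      proof (cases "z i = 0")
        case True
        then show ?thesis using i by (simp add: x1_def supp_def) (metis mult_pos_pos mult_neg_neg linorder_neqE_linordered_idom)
      next
        case False
        then have zi: "i \<in> supp z" by (simp add: supp_def)
        have "x i / z i > e" using m(2) zi e by fastforce
        then have g: "x i / z i - e > 0" by simp
        have "x1 i = z i * (x i / z i - e)" using False by (simp add: x1_def field_simps)
        then have "x1 i * x i = (x i / z i - e) * (z i * x i)" by (simp only: ac_simps)
        moreover have "z i * x i > 0" using pos zi by (simp add: mult.commute)
        ultimately show ?thesis using g by (metis mult_pos_pos)
      qed
    qed
    have sl1: "sign_le x1 x"
      unfolding sign_le_alt
    proof
      fix i show "x1 i = 0 \<or> x1 i * x i > 0"
      proof (cases "i \<in> supp x")
        case True then show ?thesis using x1pos by blast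
      next
        case False
        then have "x i = 0" by (simp add: supp_def)
        moreover have "z i = 0" using False sl_supp[OF z(3)] by (auto simp: supp_def)
        ultimately show ?thesis by (simp add: x1_def)
      qed
    qed
    have supp1: "supp x1 = supp x"
    proof
      show "supp x1 \<subseteq> supp x" using sl_supp sl1 by blast
      show "supp x \<subseteq> supp x1" using x1pos by (auto simp: supp_def)
    qed
    have sl2: "sign_le x2 x"
      using z(3) e by (auto simp: sign_le_alt x2_def mult.assoc)
    have supp2: "supp x2 = supp z" unfolding x2_def using supp_scale e by auto
    have x1C: "x1 \<in> C" using conf_in x1S sl1 by blast
    have x2C: "x2 \<in> C" using conf_in x2S sl2 by blast
    have x1ne: "x1 \<noteq> (\<lambda>_. 0)" using supp1 xne zero_iff by blast
    have x2ne: "x2 \<noteq> (\<lambda>_. 0)" using supp2 z(2) zero_iff by metis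
    have sum: "x = (\<lambda>i. x1 i + x2 i)" by (simp add: x1_def x2_def)
    have ne: "supp x1 \<noteq> supp x2" using supp1 supp2 z(4) by simp
    have "\<not> supportwise_nondecomposable C x"
      unfolding supportwise_nondecomposable_def
      using x1C x2C x1ne x2ne supp1 supp2 sum ne z(4) sl_supp[OF z(3)] by blast
    moreover have "\<not> conformally_nondecomposable C x"
    proof
      assume "conformally_nondecomposable C x"
      then obtain c where c: "c > 0" "x1 = (\<lambda>i. c * x2 i)"
        unfolding conformally_nondecomposable_def using x1C x2C x1ne x2ne sl1 sl2 sum by blast
      then have "supp x1 = supp x2" using supp_scale[of c x2] by simp
      then show False using ne by simp
    qed
    ultimately show ?thesis by blast
  qed

  have B: "\<not> supportwise_nondecomposable C x \<and> \<not> conformally_nondecomposable C x"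
    if nsm: "\<not> support_minimal C x"
  proof -
    obtain x' where x': "x' \<in> C" "x' \<noteq> (\<lambda>_. 0)" "supp x' \<subseteq> supp x" "supp x' \<noteq> supp x"
      using nsm xC assms(7) unfolding support_minimal_def by blast
    have x'S: "x' \<in> S" using Cd x'(1) by blast
    obtain w where w: "w \<in> S" "supp w = supp x'"
      "{i \<in> supp w. w i * x i > 0} \<noteq> {}"
    proof (cases "{i \<in> supp x'. x' i * x i > 0} = {}")
      case False
      then show ?thesis using that x'S by blast
    next
      case True
      define w where "w = (\<lambda>i. (-1) * x' i)"
      have "w \<in> S" unfolding w_def using assms(3) x'S by blast
      moreover have sw: "supp w = supp x'" unfolding w_def using supp_scale[of "-1" x'] by simp
      moreover have "{i \<in> supp w. w i * x i > 0} \<noteq> {}"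
      proof -
        have "supp x' \<noteq> {}" using x'(2) zero_iff by blast
        then obtain i where i: "i \<in> supp x'" by blast
        then have "x i \<noteq> 0" using x'(3) by (auto simp: supp_def)
        moreover have "x' i \<noteq> 0" using i by (simp add: supp_def)
        moreover have "\<not> x' i * x i > 0" using True i by blast
        ultimately have "x' i * x i < 0"
          by (metis linorder_neqE_linordered_idom mult_eq_0_iff)
        then have "w i * x i > 0" by (simp add: w_def)
        then show ?thesis using i sw by blast
      qed
      ultimately show ?thesis using that by blast
    qed
    define P where "P = {i \<in> supp w. w i * x i > 0}"
    have finP: "finite P" unfolding P_def using fin[OF w(1)] by auto
    have posP: "\<forall>i\<in>P. x i * w i > 0" unfolding P_def by (auto simp: mult.commute)
    obtain l i0 where l: "l > 0" "\<forall>i\<in>P. l \<le> x i / w i" "i0 \<in> P" "x i0 = l * w i0"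
      using min_ratio[OF finP w(3)[folded P_def] posP] by blast
    define z where "z = (\<lambda>i. x i - l * w i)"
    have zS: "z \<in> S" unfolding z_def using sub xS w(1) by blast
    have wx: "supp w \<subseteq> supp x" using w(2) x'(3) by simp
    have slz: "sign_le z x"
      unfolding sign_le_alt
    proof
      fix i show "z i = 0 \<or> z i * x i > 0"
      proof (cases "i \<in> supp w")
        case False
        then have "z i = x i" by (simp add: z_def supp_def)
        then show ?thesis by (cases "x i = 0") (auto simp: sq_pos)
      next
        case True
        then have wi: "w i \<noteq> 0" by (simp add: supp_def)
        have xi: "x i \<noteq> 0" using True wx by (auto simp: supp_def)
        show ?thesis
        proof (cases "i \<in> P")
          case iP: True
          have g: "x i / w i - l \<ge> 0" using l(2) iP by simp
          have "z i = w i * (x i / w i - l)" using wi by (simp add: z_def field_simps)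
          then have "z i * x i = (x i / w i - l) * (w i * x i)" by (simp only: ac_simps)
          moreover have "w i * x i > 0" using iP P_def by simp
          ultimately show ?thesis using g
            by (metis mult_eq_0_iff mult_pos_pos order_le_less)
        next
          case False
          then have "\<not> w i * x i > 0" using True P_def by simp
          then have wxn: "w i * x i < 0"
            using wi xi by (metis linorder_neqE_linordered_idom mult_eq_0_iff)
          have "z i * x i = x i * x i - l * (w i * x i)" by (simp add: z_def algebra_simps)
          moreover have "x i * x i > 0" using xi by (rule sq_pos)
          moreover have "l * (w i * x i) < 0" using l(1) wxn by (simp add: mult_pos_neg)
          ultimately show ?thesis by simp
        qed
      qed
    qed
    have i0x: "i0 \<in> supp x" using l(3) wx P_def by auto
    have "z i0 = 0" using l(4) by (simp add: z_def)
    then have zsx: "supp z \<noteq> supp x" using i0x by (auto simp: supp_def)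
    have zne: "z \<noteq> (\<lambda>_. 0)"
    proof
      assume "z = (\<lambda>_. 0)"
      then have "\<forall>i. x i = l * w i" unfolding z_def by (metis diff_eq_eq add_0)
      then have "supp x = supp w" using l(1) by (auto simp: supp_def)
      then show False using w(2) x'(4) by simp
    qed
    show ?thesis using B2[OF zS zne slz zsx] .
  qed

  have A: "conformally_nondecomposable C x" if sm: "support_minimal C x"
    unfolding conformally_nondecomposable_def
  proof (intro conjI xC assms(7) ballI impI)
    fix x1 x2 assume x1C: "x1 \<in> C" and x2C: "x2 \<in> C" and x1ne: "x1 \<noteq> (\<lambda>_. 0)"
      and x2ne: "x2 \<noteq> (\<lambda>_. 0)" and sl1: "sign_le x1 x" and sl2: "sign_le x2 x"
      and sum: "x = (\<lambda>i. x1 i + x2 i)"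
    have s1: "supp x1 = supp x" using sm x1C x1ne sl_supp[OF sl1]
      unfolding support_minimal_def by blast
    have s2: "supp x2 = supp x" using sm x2C x2ne sl_supp[OF sl2]
      unfolding support_minimal_def by blast
    have p1: "\<forall>i\<in>supp x. x1 i * x i > 0" using sl1 s1 by (auto simp: sign_le_alt supp_def)
    have p2: "\<forall>i\<in>supp x. x2 i * x i > 0" using sl2 s2 by (auto simp: sign_le_alt supp_def)
    have p12: "\<forall>i\<in>supp x. x1 i * x2 i > 0"
      using p1 p2 pos_trans by (metis mult.commute)
    obtain l i0 where l: "l > 0" "\<forall>i\<in>supp x. l \<le> x1 i / x2 i" "i0 \<in> supp x"
      "x1 i0 = l * x2 i0"
      using min_ratio[OF finx xne p12] by blast
    define z where "z = (\<lambda>i. x1 i - l * x2 i)"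
    have x1S: "x1 \<in> S" using Cd x1C by blast
    have x2S: "x2 \<in> S" using Cd x2C by blast
    have zS: "z \<in> S" unfolding z_def using sub x1S x2S by blast
    have slz: "sign_le z x"
      unfolding sign_le_alt
    proof
      fix i show "z i = 0 \<or> z i * x i > 0"
      proof (cases "i \<in> supp x")
        case False
        then have "x1 i = 0" "x2 i = 0" using s1 s2 by (auto simp: supp_def)
        then show ?thesis by (simp add: z_def)
      next
        case True
        then have wi: "x2 i \<noteq> 0" using s2 by (auto simp: supp_def)
        have g: "x1 i / x2 i - l \<ge> 0" using l(2) True by simp
        have "z i = x2 i * (x1 i / x2 i - l)" using wi by (simp add: z_def field_simps)
        then have "z i * x i = (x1 i / x2 i - l) * (x2 i * x i)" by (simp only: ac_simps)
        moreover have "x2 i * x i > 0" using p2 True by simp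
        ultimately show ?thesis using g
          by (metis mult_eq_0_iff mult_pos_pos order_le_less)
      qed
    qed
    have zC: "z \<in> C" using conf_in zS slz by blast
    have "z i0 = 0" using l(4) by (simp add: z_def)
    then have "supp z \<noteq> supp x" using l(3) by (auto simp: supp_def)
    then have "z = (\<lambda>_. 0)" using sm zC sl_supp[OF slz] unfolding support_minimal_def by blast
    then have "x1 = (\<lambda>i. l * x2 i)" unfolding z_def by (metis diff_eq_eq add_0)
    then show "\<exists>c>0. x1 = (\<lambda>i. c * x2 i)" using l(1) by blast
  qed

  have I2: "supportwise_nondecomposable C x" if sm: "support_minimal C x"
    unfolding supportwise_nondecomposable_def
  proof (intro conjI xC assms(7) ballI impI)
    fix x1 x2 assume "x1 \<in> C" "x2 \<in> C" "x1 \<noteq> (\<lambda>_. 0)" "x2 \<noteq> (\<lambda>_. 0)"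
      "supp x1 \<subseteq> supp x" "supp x2 \<subseteq> supp x"
    then show "supp x1 = supp x2" using sm unfolding support_minimal_def by metis
  qed

  show ?thesis unfolding C_def[symmetric] using A B I2 by blast
qed

end
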